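(* Let $\mathcal{N} = (W,(R_{a})_{a\in Ag},(Q_{a})_{a \in Ag},v)$ be a proper relational model for introspective knowledge and belief over $Ag$, and let $\mathcal{M}_{\mathcal{N}}$ and $f: W \to \mathcal{F}(S_{\mathcal{N}})$ be as constructed below. Then for all formulas $\phi \in \mathcal{L}_{KB}(Ag)$ and all $w \in W$: $\mathcal{N},w\models\phi$ if and only if $\mathcal{M}_{\mathcal{N}},f(w)\models\phi$.
   Context: $Ag$ is a finite set of agents, $\mathfrak{P}$ a countable set of atoms. A relational model for introspective knowledge and belief is $(W,(R_{a}),(Q_{a}),v)$ with $W$ nonempty, each $R_{a}$ an equivalence relation on $W$ (class of $w$ written $[w]_{a}$), each $Q_{a} \subseteq R_{a}$ serial and constant on $R_{a}$-classes (if $wR_{a}w'$ then $Q_{a}(w)=Q_{a}(w')$, where $Q_{a}(w)=\{u : wQ_{a}u\}$), and $v:\mathfrak{P}\to 2^{W}$. It is proper if $|\bigcap_{a\in Ag}[w]_{a}|=1$ for all $w$. Relational semantics: $w\models P$ iff $w\in v(P)$; $\bot$ false; implication classical; $w\models K_{a}\phi$ iff $w'\models\phi$ for all $w'$ with $wR_{a}w'$; $w\models B_{a}\phi$ iff $w'\models\phi$ for all $w'$ with $wQ_{a}w'$. Construction: $N_{\mathcal{N}}=\{([w]_{a},a): w\in W, a\in Ag\}$; $V_{\mathcal{N}}([w]_{a},a)=a$; $e$ is projection to the first coordinate; $S_{\mathcal{N}}=\{F\subseteq N_{\mathcal{N}} : \bigcap_{n\in F}e(n)\neq\emptyset\}$;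 $f(w)=\{([w]_{a},a): a\in Ag\}$, which is a bijection $W\to\mathcal{F}(S_{\mathcal{N}})$ by properness; $L_{\mathcal{N}}(P)=\{f(w): w\in v(P)\}$; for each $a$, $S_{\mathcal{N},a}$ is the simplicial complex whose facets are $\{F\in\mathcal{F}(S_{\mathcal{N}}) : f^{-1}(F)\,Q_{a}\,f^{-1}(F)\}$ (i.e. all subsets of these facets); $\mathcal{M}_{\mathcal{N}}=(N_{\mathcal{N}},V_{\mathcal{N}},S_{\mathcal{N}},\{S_{\mathcal{N},a}\}_{a\in Ag},L_{\mathcal{N}})$. Simplicial semantics at a facet $X$ of $S_{\mathcal{N}}$, with $\pi_{a}(X)$ the unique $a$-colored node of $X$: $X\models P$ iff $X\in L_{\mathcal{N}}(P)$; $\bot$ false; implication classical; $X\models K_{a}\phi$ iff $Y\models\phi$ for all facets $Y$ of $S_{\mathcal{N}}$ with $\pi_{a}(Y)=\pi_{a}(X)$; $X\models B_{a}\phi$ iff $Y\models\phi$ for all facets $Y$ of $S_{\mathcal{N},a}$ with $\pi_{a}(Y)=\pi_{a}(X)$. The language $\mathcal{L}_{KB}(Ag)$ is $\phi ::= P\mid\bot\mid\phi\rightarrow\psi\mid K_{a}\phi\mid B_{a}\phi$. *)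

theory Defs
  imports "HOL-Library.Countable"
begin

datatype ('p, 'ag) fml =
    Atom 'p
  | Bot
  | Imp "('p, 'ag) fml" "('p, 'ag) fml"
  | K 'ag "('p, 'ag) fml"
  | B 'ag "('p, 'ag) fml"

fun agents :: "('p, 'ag) fml \<Rightarrow> 'ag set" where
  "agents (Atom P) = {}"
| "agents Bot = {}"
| "agents (Imp \<phi> \<psi>) = agents \<phi> \<union> agents \<psi>"
| "agents (K a \<phi>) = insert a (agents \<phi>)"
| "agents (B a \<phi>) = insert a (agents \<phi>)"

definition in_LKB :: "'ag set \<Rightarrow> ('p, 'ag) fml \<Rightarrow> bool" where
  "in_LKB Ag \<phi> \<longleftrightarrow> agents \<phi> \<subseteq> Ag"

definition rel_model ::
  "'ag set \<Rightarrow> 'w set \<Rightarrow> ('ag \<Rightarrow> ('w \<times> 'w) set) \<Rightarrow> ('ag \<Rightarrow> ('w \<times> 'w) set)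
   \<Rightarrow> ('p \<Rightarrow> 'w set) \<Rightarrow> bool" where
  "rel_model Ag W R Q v \<longleftrightarrow>
     finite Ag \<and> W \<noteq> {} \<and>
     (\<forall>a\<in>Ag. equiv W (R a)) \<and>
     (\<forall>a\<in>Ag. Q a \<subseteq> R a) \<and>
     (\<forall>a\<in>Ag. \<forall>w\<in>W. \<exists>u. (w, u) \<in> Q a) \<and>
     (\<forall>a\<in>Ag. \<forall>w w'. (w, w') \<in> R a \<longrightarrow> Q a `` {w} = Q a `` {w'}) \<and>
     (\<forall>P. v P \<subseteq> W)"

definition proper ::
  "'ag set \<Rightarrow> 'w set \<Rightarrow> ('ag \<Rightarrow> ('w \<times> 'w) set) \<Rightarrow> bool" where
  "proper Ag W R \<longleftrightarrow> (\<forall>w\<in>W. card (W \<inter> (\<Inter>a\<in>Ag. R a `` {w})) = 1)"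

fun rsat ::
  "('ag \<Rightarrow> ('w \<times> 'w) set) \<Rightarrow> ('ag \<Rightarrow> ('w \<times> 'w) set) \<Rightarrow> ('p \<Rightarrow> 'w set)
   \<Rightarrow> 'w \<Rightarrow> ('p, 'ag) fml \<Rightarrow> bool" where
  "rsat R Q v w (Atom P) \<longleftrightarrow> w \<in> v P"
| "rsat R Q v w Bot \<longleftrightarrow> False"
| "rsat R Q v w (Imp \<phi> \<psi>) \<longleftrightarrow> (rsat R Q v w \<phi> \<longrightarrow> rsat R Q v w \<psi>)"
| "rsat R Q v w (K a \<phi>) \<longleftrightarrow> (\<forall>w'. (w, w') \<in> R a \<longrightarrow> rsat R Q v w' \<phi>)"
| "rsat R Q v w (B a \<phi>) \<longleftrightarrow> (\<forall>w'. (w, w') \<in> Q a \<longrightarrow> rsat R Q v w' \<phi>)"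

definition facets :: "'n set set \<Rightarrow> 'n set set" where
  "facets S = {X \<in> S. \<forall>Y\<in>S. X \<subseteq> Y \<longrightarrow> Y = X}"

definition downclose :: "'n set set \<Rightarrow> 'n set set" where
  "downclose A = {Z. \<exists>F\<in>A. Z \<subseteq> F}"

definition pi_col :: "('n \<Rightarrow> 'ag) \<Rightarrow> 'ag \<Rightarrow> 'n set \<Rightarrow> 'n" where
  "pi_col V a X = (THE n. n \<in> X \<and> V n = a)"

text \<open>Simplicial model (N, V, S, (S_a), L); satisfaction at a facet X of S.\<close>
fun ssat ::
  "'n set \<Rightarrow> ('n \<Rightarrow> 'ag) \<Rightarrow> 'n set set \<Rightarrow> ('ag \<Rightarrow> 'n set set) \<Rightarrow> ('p \<Rightarrow> 'n set set)
   \<Rightarrow> 'n set \<Rightarrow> ('p, 'ag) fml \<Rightarrow> bool" where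
  "ssat N V S Sa L X (Atom P) \<longleftrightarrow> X \<in> L P"
| "ssat N V S Sa L X Bot \<longleftrightarrow> False"
| "ssat N V S Sa L X (Imp \<phi> \<psi>) \<longleftrightarrow> (ssat N V S Sa L X \<phi> \<longrightarrow> ssat N V S Sa L X \<psi>)"
| "ssat N V S Sa L X (K a \<phi>) \<longleftrightarrow>
     (\<forall>Y\<in>facets S. pi_col V a Y = pi_col V a X \<longrightarrow> ssat N V S Sa L Y \<phi>)"
| "ssat N V S Sa L X (B a \<phi>) \<longleftrightarrow>
     (\<forall>Y\<in>facets (Sa a). pi_col V a Y = pi_col V a X \<longrightarrow> ssat N V S Sa L Y \<phi>)"

definition NN :: "'ag set \<Rightarrow> 'w set \<Rightarrow> ('ag \<Rightarrow> ('w \<times> 'w) set) \<Rightarrow> ('w set \<times> 'ag) set" where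
  "NN Ag W R = {(R a `` {w}, a) | w a. w \<in> W \<and> a \<in> Ag}"

definition VN :: "('w set \<times> 'ag) \<Rightarrow> 'ag" where
  "VN n = snd n"

definition eN :: "('w set \<times> 'ag) \<Rightarrow> 'w set" where
  "eN n = fst n"

definition SN :: "'ag set \<Rightarrow> 'w set \<Rightarrow> ('ag \<Rightarrow> ('w \<times> 'w) set) \<Rightarrow> ('w set \<times> 'ag) set set" where
  "SN Ag W R = {F. F \<subseteq> NN Ag W R \<and> (\<Inter>n\<in>F. eN n) \<noteq> {}}"

definition fN :: "'ag set \<Rightarrow> ('ag \<Rightarrow> ('w \<times> 'w) set) \<Rightarrow> 'w \<Rightarrow> ('w set \<times> 'ag) set" where
  "fN Ag R w = {(R a `` {w}, a) | a. a \<in> Ag}"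

definition LN :: "'ag set \<Rightarrow> ('ag \<Rightarrow> ('w \<times> 'w) set) \<Rightarrow> ('p \<Rightarrow> 'w set)
   \<Rightarrow> 'p \<Rightarrow> ('w set \<times> 'ag) set set" where
  "LN Ag R v P = {fN Ag R w | w. w \<in> v P}"

definition SNa :: "'ag set \<Rightarrow> 'w set \<Rightarrow> ('ag \<Rightarrow> ('w \<times> 'w) set) \<Rightarrow> ('ag \<Rightarrow> ('w \<times> 'w) set)
   \<Rightarrow> 'ag \<Rightarrow> ('w set \<times> 'ag) set set" where
  "SNa Ag W R Q a = downclose
     {F \<in> facets (SN Ag W R).
        (inv_into W (fN Ag R) F, inv_into W (fN Ag R) F) \<in> Q a}"

end

theory Submission
  imports Defs
begin

lemma facets_downclose:
  assumes "\<And>F G. F \<in> A \<Longrightarrow> G \<in> A \<Longrightarrow> F \<subseteq> G \<Longrightarrow> F = G"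
  shows "facets (downclose A) = A"
  using assms unfolding facets_def downclose_def by blast

lemma pi_fN:
  assumes "a \<in> Ag"
  shows "pi_col VN a (fN Ag R w) = (R a `` {w}, a)"
  unfolding pi_col_def fN_def VN_def
  by (rule the_equality) (use assms in auto)

lemma equivD:
  assumes "rel_model Ag W R Q v" "a \<in> Ag"
  shows "equiv W (R a)"
  using assms unfolding rel_model_def by auto

lemma Rsub:
  assumes "rel_model Ag W R Q v" "a \<in> Ag" "(x,y) \<in> R a"
  shows "x \<in> W" "y \<in> W"
  using equivD[OF assms(1,2)] assms(3) unfolding equiv_def refl_on_def by auto

lemma Rclass_eq:
  assumes "rel_model Ag W R Q v" "a \<in> Ag" "x \<in> R a `` {u}"
  shows "R a `` {u} = R a `` {x}"
proof -
  have "(u,x) \<in> R a" using assms by auto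
  then show ?thesis using equiv_class_eq[OF equivD[OF assms(1,2)]] by blast
qed

lemma Rclass_iff:
  assumes "rel_model Ag W R Q v" "a \<in> Ag" "u \<in> W" "w \<in> W"
  shows "R a `` {u} = R a `` {w} \<longleftrightarrow> (w,u) \<in> R a"
  using equivD[OF assms(1,2)] assms(3,4)
  by (metis eq_equiv_class_iff sym_def equiv_def)

lemma fN_SN:
  assumes "rel_model Ag W R Q v" "w \<in> W"
  shows "fN Ag R w \<in> SN Ag W R"
proof -
  have "w \<in> (\<Inter>n\<in>fN Ag R w. eN n)"
    unfolding fN_def eN_def using equivD[OF assms(1)] assms(2)
    by (auto simp: equiv_def refl_on_def)
  then show ?thesis unfolding SN_def NN_def fN_def using assms(2) by blast
qed

lemma sub_fN:
  assumes "rel_model Ag W R Q v" "X \<subseteq> NN Ag W R" "x \<in> (\<Inter>n\<in>X. eN n)"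
  shows "X \<subseteq> fN Ag R x"
proof
  fix n assume n: "n \<in> X"
  then obtain u a where u: "n = (R a `` {u}, a)" "u \<in> W" "a \<in> Ag"
    using assms(2) unfolding NN_def by blast
  have "x \<in> R a `` {u}" using assms(3) n u unfolding eN_def by auto
  then have "R a `` {u} = R a `` {x}" using Rclass_eq[OF assms(1) u(3)] by blast
  then show "n \<in> fN Ag R x" unfolding fN_def using u by auto
qed

lemma facets_SN:
  assumes "rel_model Ag W R Q v"
  shows "facets (SN Ag W R) = fN Ag R ` W"
proof
  show "facets (SN Ag W R) \<subseteq> fN Ag R ` W"
  proof
    fix X assume X: "X \<in> facets (SN Ag W R)"
    then have XS: "X \<in> SN Ag W R" unfolding facets_def by auto
    have "\<exists>x\<in>W. X \<subseteq> fN Ag R x"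
    proof (cases "X = {}")
      case True
      then show ?thesis using assms unfolding rel_model_def by auto
    next
      case False
      obtain x where x: "x \<in> (\<Inter>n\<in>X. eN n)" using XS unfolding SN_def by auto
      obtain n where n: "n \<in> X" using False by auto
      then obtain u a where u: "n = (R a `` {u}, a)" "u \<in> W" "a \<in> Ag"
        using XS unfolding NN_def SN_def by blast
      have "x \<in> R a `` {u}" using x n u unfolding eN_def by auto
      then have "x \<in> W" using Rsub[OF assms u(3)] by auto
      moreover have "X \<subseteq> fN Ag R x" using sub_fN[OF assms _ x] XS unfolding SN_def by auto
      ultimately show ?thesis by blast
    qed
    then obtain x where "x \<in> W" "X \<subseteq> fN Ag R x" by blast
    moreover have "fN Ag R x \<in> SN Ag W R" using fN_SN[OF assms \<open>x \<in> W\<close>] .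
    ultimately show "X \<in> fN Ag R ` W" using X unfolding facets_def by auto
  qed
next
  show "fN Ag R ` W \<subseteq> facets (SN Ag W R)"
  proof
    fix X assume "X \<in> fN Ag R ` W"
    then obtain w where w: "w \<in> W" "X = fN Ag R w" by auto
    have "Y = X" if Y: "Y \<in> SN Ag W R" "X \<subseteq> Y" for Y
    proof -
      obtain x where x: "x \<in> (\<Inter>n\<in>Y. eN n)" using Y unfolding SN_def by auto
      have Yx: "Y \<subseteq> fN Ag R x" using sub_fN[OF assms _ x] Y unfolding SN_def by auto
      have "R a `` {x} = R a `` {w}" if a: "a \<in> Ag" for a
      proof -
        have "(R a `` {w}, a) \<in> Y" using Y(2) w a unfolding fN_def by auto
        then have "x \<in> R a `` {w}" using x unfolding eN_def by auto
        then show ?thesis using Rclass_eq[OF assms a] by auto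
      qed
      then have "fN Ag R x = X" using w unfolding fN_def by auto
      then show ?thesis using Yx Y(2) by auto
    qed
    then show "X \<in> facets (SN Ag W R)" using fN_SN[OF assms w(1)] w unfolding facets_def by auto
  qed
qed

lemma fN_inj:
  assumes "rel_model Ag W R Q v" "proper Ag W R"
  shows "inj_on (fN Ag R) W"
proof
  fix w w' assume w: "w \<in> W" "w' \<in> W" "fN Ag R w = fN Ag R w'"
  have eq: "R a `` {w} = R a `` {w'}" if "a \<in> Ag" for a
    using pi_fN[OF that, of R w] pi_fN[OF that, of R w'] w(3) by auto
  have "w \<in> W \<inter> (\<Inter>a\<in>Ag. R a `` {w})" "w' \<in> W \<inter> (\<Inter>a\<in>Ag. R a `` {w})"
  proof -
    have "w \<in> R a `` {w}" "w' \<in> R a `` {w}" if "a \<in> Ag" for a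
      using w eq[OF that] equivD[OF assms(1) that] by (auto simp: equiv_def refl_on_def)
    then show "w \<in> W \<inter> (\<Inter>a\<in>Ag. R a `` {w})" "w' \<in> W \<inter> (\<Inter>a\<in>Ag. R a `` {w})"
      using w by auto
  qed
  moreover have "card (W \<inter> (\<Inter>a\<in>Ag. R a `` {w})) = 1"
    using assms(2) w(1) unfolding proper_def by auto
  ultimately show "w = w'" by (metis card_1_singletonE singletonD)
qed

lemma facets_SNa:
  assumes "rel_model Ag W R Q v" "proper Ag W R"
  shows "facets (SNa Ag W R Q a) = fN Ag R ` {u \<in> W. (u,u) \<in> Q a}"
proof -
  let ?A = "{F \<in> facets (SN Ag W R).
        (inv_into W (fN Ag R) F, inv_into W (fN Ag R) F) \<in> Q a}"
  have "facets (SNa Ag W R Q a) = ?A"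
    unfolding SNa_def
    by (rule facets_downclose) (auto simp: facets_def)
  also have "?A = fN Ag R ` {u \<in> W. (u,u) \<in> Q a}"
    using facets_SN[OF assms(1)] inv_into_f_f[OF fN_inj[OF assms]] by auto
  finally show ?thesis .
qed

theorem lemma6:
  fixes Ag :: "'ag set" and W :: "'w set"
    and R Q :: "'ag \<Rightarrow> ('w \<times> 'w) set" and v :: "'p::countable \<Rightarrow> 'w set"
  assumes "rel_model Ag W R Q v"
    and "proper Ag W R"
    and "in_LKB Ag \<phi>"
    and "w \<in> W"
  shows "rsat R Q v w \<phi> \<longleftrightarrow>
         ssat (NN Ag W R) VN (SN Ag W R) (SNa Ag W R Q) (LN Ag R v) (fN Ag R w) \<phi>"
  using assms(3,4)
proof (induction \<phi> arbitrary: w)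
  case (Atom P)
  have "v P \<subseteq> W" using assms(1) unfolding rel_model_def by auto
  then show ?case using Atom inj_onD[OF fN_inj[OF assms(1,2)]] unfolding LN_def
    by auto
next
  case Bot
  then show ?case by simp
next
  case (Imp \<phi>1 \<phi>2)
  then show ?case by (simp add: in_LKB_def)
next
  case (K a \<phi>)
  have a: "a \<in> Ag" and ph: "in_LKB Ag \<phi>" using K.prems unfolding in_LKB_def by auto
  have "rsat R Q v w (K a \<phi>) \<longleftrightarrow> (\<forall>u\<in>W. (w,u) \<in> R a \<longrightarrow> rsat R Q v u \<phi>)"
    using Rsub[OF assms(1) a] by auto
  also have "\<dots> \<longleftrightarrow> (\<forall>u\<in>W. R a `` {u} = R a `` {w} \<longrightarrow>
      ssat (NN Ag W R) VN (SN Ag W R) (SNa Ag W R Q) (LN Ag R v) (fN Ag R u) \<phi>)"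
    using K.IH[OF ph] Rclass_iff[OF assms(1) a _ K.prems(2)] by auto
  also have "\<dots> \<longleftrightarrow> ssat (NN Ag W R) VN (SN Ag W R) (SNa Ag W R Q) (LN Ag R v) (fN Ag R w) (K a \<phi>)"
    using facets_SN[OF assms(1)] pi_fN[OF a, of R] by auto
  finally show ?case .
next
  case (B a \<phi>)
  have a: "a \<in> Ag" and ph: "in_LKB Ag \<phi>" using B.prems unfolding in_LKB_def by auto
  have QR: "Q a \<subseteq> R a" and Qc: "\<And>x y. (x,y) \<in> R a \<Longrightarrow> Q a `` {x} = Q a `` {y}"
    using assms(1) a unfolding rel_model_def by auto
  have eqv: "(w,u) \<in> Q a \<longleftrightarrow> (u \<in> W \<and> (u,u) \<in> Q a \<and> (w,u) \<in> R a)" for u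
  proof
    assume h: "(w,u) \<in> Q a"
    then have r: "(w,u) \<in> R a" using QR by auto
    then have "u \<in> W" using Rsub[OF assms(1) a] by auto
    moreover have "(u,u) \<in> Q a" using Qc[OF r] h by auto
    ultimately show "u \<in> W \<and> (u,u) \<in> Q a \<and> (w,u) \<in> R a" using r by auto
  next
    assume "u \<in> W \<and> (u,u) \<in> Q a \<and> (w,u) \<in> R a"
    then show "(w,u) \<in> Q a" using Qc by blast
  qed
  have "rsat R Q v w (B a \<phi>) \<longleftrightarrow> (\<forall>u\<in>W. (u,u) \<in> Q a \<longrightarrow> (w,u) \<in> R a \<longrightarrow> rsat R Q v u \<phi>)"
    using eqv by auto
  also have "\<dots> \<longleftrightarrow> (\<forall>u\<in>W. (u,u) \<in> Q a \<longrightarrow> R a `` {u} = R a `` {w} \<longrightarrow>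
      ssat (NN Ag W R) VN (SN Ag W R) (SNa Ag W R Q) (LN Ag R v) (fN Ag R u) \<phi>)"
    using B.IH[OF ph] Rclass_iff[OF assms(1) a _ B.prems(2)] by auto
  also have "\<dots> \<longleftrightarrow> ssat (NN Ag W R) VN (SN Ag W R) (SNa Ag W R Q) (LN Ag R v) (fN Ag R w) (B a \<phi>)"
    using facets_SNa[OF assms(1,2)] pi_fN[OF a, of R] by auto
  finally show ?case .
qed

end
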